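(* Let $s\ge2$ and let $\varrho\in C^s(\mathbb A,\mathbb R)$, $\mathbb A=\mathbb T^1\times[0,1]$, satisfy $\varrho(\xi,0)=\varrho(\xi,1)=0$ for all $\xi$, with $\|\varrho\|_{C^s}$ sufficiently small. Then there is a unique map $F_\varrho\in C^s(\mathbb A,\mathbb A)$ which fixes every point of $\{\eta=0\}$ and has the form $F_\varrho(\xi,\eta)=(\xi^+,\eta^+)$ with $$\xi^+=\xi+\eta+\varrho(\xi,\eta)\pmod1,\qquad \eta^+=\eta+\varrho(\xi,\eta)+\varrho(\xi^+,\eta^+).$$ Moreover $F_\varrho(\xi,1)=(\xi,1)$ and $F_\varrho^{-1}(\xi,\eta)=(\xi^-,\eta^-)$ with $\xi^-=\xi-\eta+\varrho(\xi,\eta)\pmod1$ and $\eta^-=\eta-\varrho(\xi,\eta)-\varrho(\xi^-,\eta^-)$.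
   Context: $\mathbb T^1=\mathbb R/\mathbb Z$; $(\xi,\eta)$ are the natural coordinates on $\mathbb A=\mathbb T^1\times[0,1]$. *)

theory Defs
  imports Complex_Main
begin

text \<open>The annulus A = T^1 x [0,1] is represented by its universal cover, the strip
  R x [0,1]; functions on A are functions on the strip that are 1-periodic in xi;
  maps A -> A are represented by lifts (maps of the strip to itself compatible
  with the identification xi ~ xi + 1).\<close>

definition Astrip :: "(real \<times> real) set" where
  "Astrip = UNIV \<times> {0..1}"

definition eqA :: "real \<times> real \<Rightarrow> real \<times> real \<Rightarrow> bool" where
  "eqA p q \<longleftrightarrow> fst p - fst q \<in> \<int> \<and> snd p = snd q"

definition A_map :: "(real \<times> real \<Rightarrow> real \<times> real) \<Rightarrow> bool" where
  "A_map F \<longleftrightarrow> (\<forall>p\<in>Astrip. F p \<in> Astrip) \<and>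
     (\<forall>p\<in>Astrip. \<forall>q\<in>Astrip. eqA p q \<longrightarrow> eqA (F p) (F q))"

definition A_fun :: "(real \<times> real \<Rightarrow> real) \<Rightarrow> bool" where
  "A_fun g \<longleftrightarrow> (\<forall>\<xi> \<eta>. \<eta> \<in> {0..1} \<longrightarrow> g (\<xi> + 1, \<eta>) = g (\<xi>, \<eta>))"

definition pd1 :: "(real \<times> real \<Rightarrow> real) \<Rightarrow> real \<times> real \<Rightarrow> real" where
  "pd1 g p = (THE d. ((\<lambda>t. g (t, snd p)) has_real_derivative d) (at (fst p)))"

definition pd2 :: "(real \<times> real \<Rightarrow> real) \<Rightarrow> real \<times> real \<Rightarrow> real" where
  "pd2 g p = (THE d. ((\<lambda>t. g (fst p, t)) has_real_derivative d) (at (snd p) within {0..1}))"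

fun partials :: "nat \<Rightarrow> (real \<times> real \<Rightarrow> real) \<Rightarrow> (real \<times> real \<Rightarrow> real) set" where
  "partials 0 g = {g}"
| "partials (Suc k) g = (\<Union>h\<in>partials k g. {pd1 h, pd2 h})"

definition Cs_on_A :: "nat \<Rightarrow> (real \<times> real \<Rightarrow> real) \<Rightarrow> bool" where
  "Cs_on_A s g \<longleftrightarrow>
     (\<forall>k<s. \<forall>h\<in>partials k g. \<forall>p\<in>Astrip.
        (\<exists>d. ((\<lambda>t. h (t, snd p)) has_real_derivative d) (at (fst p))) \<and>
        (\<exists>d. ((\<lambda>t. h (fst p, t)) has_real_derivative d) (at (snd p) within {0..1}))) \<and>
     (\<forall>k\<le>s. \<forall>h\<in>partials k g. continuous_on Astrip h)"

definition Cs_norm :: "nat \<Rightarrow> (real \<times> real \<Rightarrow> real) \<Rightarrow> real" where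
  "Cs_norm s g = Sup {\<bar>h p\<bar> | k h p. k \<le> s \<and> h \<in> partials k g \<and> p \<in> Astrip}"

definition Cs_map :: "nat \<Rightarrow> (real \<times> real \<Rightarrow> real \<times> real) \<Rightarrow> bool" where
  "Cs_map s F \<longleftrightarrow> Cs_on_A s (\<lambda>p. fst (F p)) \<and> Cs_on_A s (\<lambda>p. snd (F p))"

definition is_F :: "nat \<Rightarrow> (real \<times> real \<Rightarrow> real) \<Rightarrow> (real \<times> real \<Rightarrow> real \<times> real) \<Rightarrow> bool" where
  "is_F s \<rho> F \<longleftrightarrow> A_map F \<and> Cs_map s F \<and>
     (\<forall>\<xi>. eqA (F (\<xi>, 0)) (\<xi>, 0)) \<and>
     (\<forall>p\<in>Astrip. fst (F p) - (fst p + snd p + \<rho> p) \<in> \<int> \<and>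
                 snd (F p) = snd p + \<rho> p + \<rho> (F p))"

end

theory Submission
  imports Defs "HOL-Analysis.Analysis"
begin


definition der1 :: "(real \<times> real \<Rightarrow> real) \<Rightarrow> real \<Rightarrow> real \<times> real \<Rightarrow> bool" where
  "der1 g d p \<longleftrightarrow> ((\<lambda>t. g (t, snd p)) has_real_derivative d) (at (fst p))"
definition der2 :: "(real \<times> real \<Rightarrow> real) \<Rightarrow> real \<Rightarrow> real \<times> real \<Rightarrow> bool" where
  "der2 g d p \<longleftrightarrow> ((\<lambda>t. g (fst p, t)) has_real_derivative d) (at (snd p) within {0..1})"

lemma partials_Suc': "partials (Suc k) g = partials k (pd1 g) \<union> partials k (pd2 g)"
  by (induction k arbitrary: g) auto

lemma Cs0: "Cs_on_A 0 g \<longleftrightarrow> continuous_on Astrip g"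
  by (simp add: Cs_on_A_def)

lemma CsSuc: "Cs_on_A (Suc k) g \<longleftrightarrow> continuous_on Astrip g \<and>
   (\<forall>p\<in>Astrip. (\<exists>d. der1 g d p) \<and> (\<exists>d. der2 g d p)) \<and> Cs_on_A k (pd1 g) \<and> Cs_on_A k (pd2 g)"
proof -
  define P where "P = (\<lambda>j g. \<forall>h\<in>partials j g. \<forall>p\<in>Astrip. (\<exists>d. der1 h d p) \<and> (\<exists>d. der2 h d p))"
  define Q where "Q = (\<lambda>j g. \<forall>h\<in>partials j g. continuous_on Astrip h)"
  have C: "Cs_on_A k g \<longleftrightarrow> (\<forall>j<k. P j g) \<and> (\<forall>j<Suc k. Q j g)" for k g
    unfolding Cs_on_A_def P_def Q_def der1_def der2_def less_Suc_eq_le by blast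
  have PS: "P (Suc j) g \<longleftrightarrow> P j (pd1 g) \<and> P j (pd2 g)" for j
    unfolding P_def partials_Suc' by blast
  have QS: "Q (Suc j) g \<longleftrightarrow> Q j (pd1 g) \<and> Q j (pd2 g)" for j
    unfolding Q_def partials_Suc' by blast
  have P0: "P 0 g \<longleftrightarrow> (\<forall>p\<in>Astrip. (\<exists>d. der1 g d p) \<and> (\<exists>d. der2 g d p))"
    unfolding P_def by simp
  have Q0: "Q 0 g \<longleftrightarrow> continuous_on Astrip g" unfolding Q_def by simp
  show ?thesis
    unfolding C All_less_Suc2[where n=k] All_less_Suc2[where n="Suc k"] PS QS P0 Q0 by blast
qed

lemma Cs_mono: "Cs_on_A (Suc k) g \<Longrightarrow> Cs_on_A k g"
  unfolding Cs_on_A_def by (blast intro: less_SucI le_SucI)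

lemma Cs_mono': "Cs_on_A k g \<Longrightarrow> j \<le> k \<Longrightarrow> Cs_on_A j g"
  by (induction k) (auto simp: le_Suc_eq dest: Cs_mono)

lemma Astrip_iff: "p \<in> Astrip \<longleftrightarrow> snd p \<in> {0..1}"
  by (cases p) (auto simp: Astrip_def)

lemma der1_unique: "der1 g d p \<Longrightarrow> pd1 g p = d"
  unfolding der1_def pd1_def using DERIV_unique by blast

lemma at01_nonbot: "y \<in> {0..1::real} \<Longrightarrow> at y within {0..1} \<noteq> bot"
  using trivial_limit_within[of y "{0..1::real}"] islimpt_Icc[of 0 1 y] by auto

lemma der2_unique:
  assumes a1: "der2 g d p" and a2: "p \<in> Astrip" shows "pd2 g p = d"
  unfolding pd2_def
proof (rule the_equality)
  show "((\<lambda>t. g (fst p, t)) has_real_derivative d) (at (snd p) within {0..1})" using a1 by (simp add: der2_def)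
  fix e assume e: "((\<lambda>t. g (fst p, t)) has_real_derivative e) (at (snd p) within {0..1})"
  have nb: "at (snd p) within {0..1} \<noteq> bot" using a2 at01_nonbot Astrip_iff by blast
  show "e = d" using tendsto_unique[OF nb e[unfolded has_field_derivative_iff] a1[unfolded der2_def has_field_derivative_iff]] .
qed

lemma der1_pd1: "der1 g d p \<Longrightarrow> der1 g (pd1 g p) p"
  using der1_unique[of g d p] by simp
lemma der2_pd2: "der2 g d p \<Longrightarrow> p \<in> Astrip \<Longrightarrow> der2 g (pd2 g p) p"
  using der2_unique[of g d p] by simp

lemma der2_cong: "der2 f d p \<Longrightarrow> p \<in> Astrip \<Longrightarrow> (\<forall>q\<in>Astrip. f q = g q) \<Longrightarrow> der2 g d p"
  unfolding der2_def
  by (erule has_field_derivative_transform_within[where d=1]; auto simp: Astrip_iff)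

lemma der1_cong: "der1 f d p \<Longrightarrow> p \<in> Astrip \<Longrightarrow> (\<forall>q\<in>Astrip. f q = g q) \<Longrightarrow> der1 g d p"
proof -
  assume a: "der1 f d p" "p \<in> Astrip" "\<forall>q\<in>Astrip. f q = g q"
  have "(\<lambda>t. f (t, snd p)) = (\<lambda>t. g (t, snd p))"
  proof
    fix t have "(t, snd p) \<in> Astrip" using a(2) by (simp add: Astrip_iff)
    then show "f (t, snd p) = g (t, snd p)" using a(3) by blast
  qed
  then show ?thesis using a(1) unfolding der1_def by simp
qed

lemma Cs_cong: "Cs_on_A k f \<Longrightarrow> (\<forall>q\<in>Astrip. f q = g q) \<Longrightarrow> Cs_on_A k g"
proof (induction k arbitrary: f g)
  case 0
  then show ?case using continuous_on_cong by (simp add: Cs0)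
next
  case (Suc k)
  have cf: "continuous_on Astrip f" and d: "\<forall>p\<in>Astrip. (\<exists>d. der1 f d p) \<and> (\<exists>d. der2 f d p)"
    and c1: "Cs_on_A k (pd1 f)" and c2: "Cs_on_A k (pd2 f)"
  proof -
    have H: "continuous_on Astrip f \<and> (\<forall>p\<in>Astrip. (\<exists>d. der1 f d p) \<and> (\<exists>d. der2 f d p))
        \<and> Cs_on_A k (pd1 f) \<and> Cs_on_A k (pd2 f)" using Suc.prems(1) unfolding CsSuc .
    then show "continuous_on Astrip f" "\<forall>p\<in>Astrip. (\<exists>d. der1 f d p) \<and> (\<exists>d. der2 f d p)"
      "Cs_on_A k (pd1 f)" "Cs_on_A k (pd2 f)" by blast+
  qed
  have eq: "\<forall>q\<in>Astrip. f q = g q" by (rule Suc.prems(2))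
  have e1: "\<forall>q\<in>Astrip. pd1 f q = pd1 g q"
  proof
    fix q assume q: "q \<in> Astrip"
    then obtain d where "der1 f d q" using d by blast
    then have a: "der1 f d q" .
    have "der1 g d q" by (rule der1_cong[OF a q eq])
    then show "pd1 f q = pd1 g q" using der1_unique[OF a] der1_unique by simp
  qed
  have e2: "\<forall>q\<in>Astrip. pd2 f q = pd2 g q"
  proof
    fix q assume q: "q \<in> Astrip"
    then obtain d where "der2 f d q" using d by blast
    then have a: "der2 f d q" .
    have "der2 g d q" by (rule der2_cong[OF a q eq])
    then show "pd2 f q = pd2 g q" using der2_unique[OF a q] der2_unique q by simp
  qed
  have "continuous_on Astrip g" using continuous_on_cong[of Astrip Astrip f g] cf eq by simp
  moreover have "\<forall>p\<in>Astrip. (\<exists>d. der1 g d p) \<and> (\<exists>d. der2 g d p)"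
  proof
    fix p assume p: "p \<in> Astrip"
    then obtain d1 d2 where "der1 f d1 p" "der2 f d2 p" using d by blast
    then show "(\<exists>d. der1 g d p) \<and> (\<exists>d. der2 g d p)" using der1_cong der2_cong p eq by blast
  qed
  moreover have "Cs_on_A k (pd1 g)" using Suc.IH[OF c1 e1] .
  moreover have "Cs_on_A k (pd2 g)" using Suc.IH[OF c2 e2] .
  ultimately show ?case unfolding CsSuc by (intro conjI)
qed

lemma CsI:
  assumes "continuous_on Astrip f" "\<And>p. p \<in> Astrip \<Longrightarrow> der1 f (Da p) p"
    "\<And>p. p \<in> Astrip \<Longrightarrow> der2 f (Db p) p" "Cs_on_A k Da" "Cs_on_A k Db"
  shows "Cs_on_A (Suc k) f"
proof -
  have "\<forall>q\<in>Astrip. Da q = pd1 f q" using assms(2) der1_unique by metis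
  then have 1: "Cs_on_A k (pd1 f)" using Cs_cong assms(4) by blast
  have "\<forall>q\<in>Astrip. Db q = pd2 f q" using assms(3) der2_unique by metis
  then have 2: "Cs_on_A k (pd2 f)" using Cs_cong assms(5) by blast
  have 3: "\<forall>p\<in>Astrip. (\<exists>d. der1 f d p) \<and> (\<exists>d. der2 f d p)" using assms(2,3) by blast
  show ?thesis unfolding CsSuc using 1 2 3 assms(1) by (intro conjI)
qed

lemma CsD:
  assumes "Cs_on_A (Suc k) f"
  shows "continuous_on Astrip f" "\<And>p. p \<in> Astrip \<Longrightarrow> der1 f (pd1 f p) p"
    "\<And>p. p \<in> Astrip \<Longrightarrow> der2 f (pd2 f p) p" "Cs_on_A k (pd1 f)" "Cs_on_A k (pd2 f)"
proof -
  have H: "continuous_on Astrip f \<and> (\<forall>p\<in>Astrip. (\<exists>d. der1 f d p) \<and> (\<exists>d. der2 f d p))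
        \<and> Cs_on_A k (pd1 f) \<and> Cs_on_A k (pd2 f)" using assms unfolding CsSuc .
  then show "continuous_on Astrip f" "Cs_on_A k (pd1 f)" "Cs_on_A k (pd2 f)" by blast+
  show "\<And>p. p \<in> Astrip \<Longrightarrow> der1 f (pd1 f p) p" using H der1_pd1 by blast
  show "\<And>p. p \<in> Astrip \<Longrightarrow> der2 f (pd2 f p) p" using H der2_pd2 by blast
qed


lemma der1_add: "der1 f a p \<Longrightarrow> der1 g b p \<Longrightarrow> der1 (\<lambda>q. f q + g q) (a + b) p"
  unfolding der1_def by (rule DERIV_add)
lemma der2_add: "der2 f a p \<Longrightarrow> der2 g b p \<Longrightarrow> der2 (\<lambda>q. f q + g q) (a + b) p"
  unfolding der2_def by (rule DERIV_add)
lemma der1_diff: "der1 f a p \<Longrightarrow> der1 g b p \<Longrightarrow> der1 (\<lambda>q. f q - g q) (a - b) p"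
  unfolding der1_def by (rule DERIV_diff)
lemma der2_diff: "der2 f a p \<Longrightarrow> der2 g b p \<Longrightarrow> der2 (\<lambda>q. f q - g q) (a - b) p"
  unfolding der2_def by (rule DERIV_diff)
lemma der1_mult: "der1 f a p \<Longrightarrow> der1 g b p \<Longrightarrow> der1 (\<lambda>q. f q * g q) (a * g p + f p * b) p"
  unfolding der1_def using DERIV_mult[of "\<lambda>t. f (t, snd p)" a "fst p" UNIV "\<lambda>t. g (t, snd p)" b]
  by (simp add: mult.commute)
lemma der2_mult: "der2 f a p \<Longrightarrow> der2 g b p \<Longrightarrow> der2 (\<lambda>q. f q * g q) (a * g p + f p * b) p"
  unfolding der2_def using DERIV_mult[of "\<lambda>t. f (fst p, t)" a "snd p" "{0..1}" "\<lambda>t. g (fst p, t)" b]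
  by (simp add: mult.commute)
lemma der1_inv: "der1 f a p \<Longrightarrow> f p \<noteq> 0 \<Longrightarrow> der1 (\<lambda>q. inverse (f q)) (- (a * (inverse (f p) * inverse (f p)))) p"
  unfolding der1_def using DERIV_inverse'[of "\<lambda>t. f (t, snd p)" a "fst p" UNIV]
  by (simp add: algebra_simps)
lemma der2_inv: "der2 f a p \<Longrightarrow> f p \<noteq> 0 \<Longrightarrow> der2 (\<lambda>q. inverse (f q)) (- (a * (inverse (f p) * inverse (f p)))) p"
  unfolding der2_def using DERIV_inverse'[of "\<lambda>t. f (fst p, t)" a "snd p" "{0..1}"]
  by (simp add: algebra_simps)

lemma Cs_const: "Cs_on_A k (\<lambda>p. c)"
proof (induction k arbitrary: c)
  case 0 then show ?case by (simp add: Cs0)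
next
  case (Suc k)
  show ?case
    by (rule CsI[where Da="\<lambda>p. 0" and Db="\<lambda>p. 0"]) (auto simp: der1_def der2_def Suc)
qed

lemma Cs_fst: "Cs_on_A k (\<lambda>p. fst p)"
proof (cases k)
  case 0 then show ?thesis by (simp add: Cs0 continuous_on_fst)
next
  case (Suc k)
  show ?thesis unfolding Suc
    by (rule CsI[where Da="\<lambda>p. 1" and Db="\<lambda>p. 0"]) (auto simp: der1_def der2_def Cs_const continuous_on_fst)
qed

lemma Cs_snd: "Cs_on_A k (\<lambda>p. snd p)"
proof (cases k)
  case 0 then show ?thesis by (simp add: Cs0 continuous_on_snd)
next
  case (Suc k)
  show ?thesis unfolding Suc
    by (rule CsI[where Da="\<lambda>p. 0" and Db="\<lambda>p. 1"]) (auto simp: der1_def der2_def Cs_const continuous_on_snd)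
qed

lemma Cs_add: "Cs_on_A k f \<Longrightarrow> Cs_on_A k g \<Longrightarrow> Cs_on_A k (\<lambda>p. f p + g p)"
proof (induction k arbitrary: f g)
  case 0 then show ?case by (simp add: Cs0 continuous_on_add)
next
  case (Suc k)
  show ?case
  proof (rule CsI[where Da="\<lambda>p. pd1 f p + pd1 g p" and Db="\<lambda>p. pd2 f p + pd2 g p"])
    show "continuous_on Astrip (\<lambda>p. f p + g p)" using CsD(1)[OF Suc.prems(1)] CsD(1)[OF Suc.prems(2)]
      by (rule continuous_on_add)
    show "der1 (\<lambda>p. f p + g p) (pd1 f p + pd1 g p) p" if "p \<in> Astrip" for p
      using der1_add CsD(2)[OF Suc.prems(1) that] CsD(2)[OF Suc.prems(2) that] by blast
    show "der2 (\<lambda>p. f p + g p) (pd2 f p + pd2 g p) p" if "p \<in> Astrip" for p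
      using der2_add CsD(3)[OF Suc.prems(1) that] CsD(3)[OF Suc.prems(2) that] by blast
    show "Cs_on_A k (\<lambda>p. pd1 f p + pd1 g p)" using Suc.IH CsD(4) Suc.prems by blast
    show "Cs_on_A k (\<lambda>p. pd2 f p + pd2 g p)" using Suc.IH CsD(5) Suc.prems by blast
  qed
qed

lemma Cs_diff: "Cs_on_A k f \<Longrightarrow> Cs_on_A k g \<Longrightarrow> Cs_on_A k (\<lambda>p. f p - g p)"
proof (induction k arbitrary: f g)
  case 0 then show ?case by (simp add: Cs0 continuous_on_diff)
next
  case (Suc k)
  show ?case
  proof (rule CsI[where Da="\<lambda>p. pd1 f p - pd1 g p" and Db="\<lambda>p. pd2 f p - pd2 g p"])
    show "continuous_on Astrip (\<lambda>p. f p - g p)" using CsD(1)[OF Suc.prems(1)] CsD(1)[OF Suc.prems(2)]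
      by (rule continuous_on_diff)
    show "der1 (\<lambda>p. f p - g p) (pd1 f p - pd1 g p) p" if "p \<in> Astrip" for p
      using der1_diff CsD(2)[OF Suc.prems(1) that] CsD(2)[OF Suc.prems(2) that] by blast
    show "der2 (\<lambda>p. f p - g p) (pd2 f p - pd2 g p) p" if "p \<in> Astrip" for p
      using der2_diff CsD(3)[OF Suc.prems(1) that] CsD(3)[OF Suc.prems(2) that] by blast
    show "Cs_on_A k (\<lambda>p. pd1 f p - pd1 g p)" using Suc.IH CsD(4) Suc.prems by blast
    show "Cs_on_A k (\<lambda>p. pd2 f p - pd2 g p)" using Suc.IH CsD(5) Suc.prems by blast
  qed
qed

lemma Cs_mult: "Cs_on_A k f \<Longrightarrow> Cs_on_A k g \<Longrightarrow> Cs_on_A k (\<lambda>p. f p * g p)"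
proof (induction k arbitrary: f g)
  case 0 then show ?case by (simp add: Cs0 continuous_on_mult)
next
  case (Suc k)
  have f: "Cs_on_A k f" and g: "Cs_on_A k g" using Suc.prems Cs_mono by blast+
  show ?case
  proof (rule CsI[where Da="\<lambda>p. pd1 f p * g p + f p * pd1 g p" and Db="\<lambda>p. pd2 f p * g p + f p * pd2 g p"])
    show "continuous_on Astrip (\<lambda>p. f p * g p)" using CsD(1)[OF Suc.prems(1)] CsD(1)[OF Suc.prems(2)]
      by (rule continuous_on_mult)
    show "der1 (\<lambda>p. f p * g p) (pd1 f p * g p + f p * pd1 g p) p" if "p \<in> Astrip" for p
      using der1_mult CsD(2)[OF Suc.prems(1) that] CsD(2)[OF Suc.prems(2) that] by blast
    show "der2 (\<lambda>p. f p * g p) (pd2 f p * g p + f p * pd2 g p) p" if "p \<in> Astrip" for p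
      using der2_mult CsD(3)[OF Suc.prems(1) that] CsD(3)[OF Suc.prems(2) that] by blast
    show "Cs_on_A k (\<lambda>p. pd1 f p * g p + f p * pd1 g p)"
      using Cs_add Suc.IH CsD(4) Suc.prems f g by blast
    show "Cs_on_A k (\<lambda>p. pd2 f p * g p + f p * pd2 g p)"
      using Cs_add Suc.IH CsD(5) Suc.prems f g by blast
  qed
qed

lemma Cs_inv: "Cs_on_A k f \<Longrightarrow> (\<forall>p\<in>Astrip. f p \<noteq> 0) \<Longrightarrow> Cs_on_A k (\<lambda>p. inverse (f p))"
proof (induction k arbitrary: f)
  case 0 then show ?case by (simp add: Cs0 continuous_on_inverse)
next
  case (Suc k)
  have f: "Cs_on_A k f" using Suc.prems Cs_mono by blast
  have fi: "Cs_on_A k (\<lambda>p. inverse (f p))" using Suc.IH[OF f Suc.prems(2)] .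
  have ii: "Cs_on_A k (\<lambda>p. inverse (f p) * inverse (f p))" using Cs_mult[OF fi fi] .
  show ?case
  proof (rule CsI[where Da="\<lambda>p. 0 - pd1 f p * (inverse (f p) * inverse (f p))"
                  and Db="\<lambda>p. 0 - pd2 f p * (inverse (f p) * inverse (f p))"])
    show "continuous_on Astrip (\<lambda>p. inverse (f p))" using CsD(1)[OF Suc.prems(1)] Suc.prems(2)
      by (rule continuous_on_inverse)
    show "der1 (\<lambda>p. inverse (f p)) (0 - pd1 f p * (inverse (f p) * inverse (f p))) p" if "p \<in> Astrip" for p
      using der1_inv CsD(2)[OF Suc.prems(1) that] Suc.prems(2) that by fastforce
    show "der2 (\<lambda>p. inverse (f p)) (0 - pd2 f p * (inverse (f p) * inverse (f p))) p" if "p \<in> Astrip" for p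
      using der2_inv CsD(3)[OF Suc.prems(1) that] Suc.prems(2) that by fastforce
    show "Cs_on_A k (\<lambda>p. 0 - pd1 f p * (inverse (f p) * inverse (f p)))"
      using Cs_diff[OF Cs_const Cs_mult[OF CsD(4)[OF Suc.prems(1)] ii]] .
    show "Cs_on_A k (\<lambda>p. 0 - pd2 f p * (inverse (f p) * inverse (f p)))"
      using Cs_diff[OF Cs_const Cs_mult[OF CsD(5)[OF Suc.prems(1)] ii]] .
  qed
qed




lemma mvt_gen:
  fixes f :: "real \<Rightarrow> real"
  assumes "\<forall>x\<in>{min a b..max a b}. (f has_real_derivative f' x) (at x within {min a b..max a b})"
  shows "\<exists>\<theta>\<in>{min a b..max a b}. f b - f a = (b - a) * f' \<theta>"
proof (cases "a \<le> b")
  case True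
  then have "\<exists>x\<in>{a..b}. f b - f a = (\<lambda>h. f' x * h) (b - a)"
    using assms by (intro mvt_very_simple) (auto simp: has_field_derivative_def)
  then show ?thesis using True by (auto simp: mult.commute)
next
  case False
  then have "\<exists>x\<in>{b..a}. f a - f b = (\<lambda>h. f' x * h) (a - b)"
    using assms by (intro mvt_very_simple) (auto simp: has_field_derivative_def)
  then obtain x where "x\<in>{b..a}" "f a - f b = f' x * (a - b)" by auto
  then show ?thesis using False by (intro bexI[of _ x]) (auto simp: algebra_simps)
qed

lemma mvt_line1:
  fixes f :: "real \<Rightarrow> real"
  assumes "\<And>x. (f has_real_derivative f' x) (at x)"
  shows "\<exists>\<theta>\<in>{min a b..max a b}. f b - f a = (b - a) * f' \<theta>"
  using assms by (intro mvt_gen) (auto intro: has_field_derivative_at_within)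

lemma mvt_line2:
  fixes f :: "real \<Rightarrow> real"
  assumes "\<And>x. x \<in> {0..1} \<Longrightarrow> (f has_real_derivative f' x) (at x within {0..1})"
    and "a \<in> {0..1}" "b \<in> {0..1}"
  shows "\<exists>\<theta>\<in>{min a b..max a b}. f b - f a = (b - a) * f' \<theta>"
proof (rule mvt_gen, intro ballI)
  fix x assume x: "x \<in> {min a b..max a b}"
  have sub: "{min a b..max a b} \<subseteq> {0..1}" using assms(2,3) by auto
  then have "x \<in> {0..1}" using x by blast
  then show "(f has_real_derivative f' x) (at x within {min a b..max a b})"
    using assms(1) sub DERIV_subset by blast
qed

definition Dok :: "(real \<times> real \<Rightarrow> real) \<Rightarrow> bool" where
  "Dok \<rho> \<longleftrightarrow> (\<forall>q\<in>Astrip. der1 \<rho> (pd1 \<rho> q) q \<and> der2 \<rho> (pd2 \<rho> q) q)"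

lemma Dok_Cs: "Cs_on_A (Suc k) \<rho> \<Longrightarrow> Dok \<rho>"
  unfolding Dok_def using CsD by blast

lemma rho_split:
  assumes D: "Dok \<rho>" and p: "(x, y) \<in> Astrip" and p': "(x', y') \<in> Astrip"
  shows "\<exists>\<theta>1 \<theta>2. \<theta>1 \<in> {min x x'..max x x'} \<and> \<theta>2 \<in> {min y y'..max y y'} \<and>
     \<rho> (x', y') - \<rho> (x, y) = (x' - x) * pd1 \<rho> (\<theta>1, y') + (y' - y) * pd2 \<rho> (x, \<theta>2)"
proof -
  have y: "y \<in> {0..1}" "y' \<in> {0..1}" using p p' by (auto simp: Astrip_iff)
  have "\<exists>\<theta>\<in>{min x x'..max x x'}. (\<lambda>t. \<rho> (t, y')) x' - (\<lambda>t. \<rho> (t, y')) x = (x' - x) * (\<lambda>t. pd1 \<rho> (t, y')) \<theta>"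
  proof (rule mvt_line1)
    fix t have "(t, y') \<in> Astrip" using y by (simp add: Astrip_iff)
    then show "((\<lambda>t. \<rho> (t, y')) has_real_derivative pd1 \<rho> (t, y')) (at t)"
      using D unfolding Dok_def der1_def by fastforce
  qed
  then obtain \<theta>1 where t1: "\<theta>1 \<in> {min x x'..max x x'}" "\<rho> (x', y') - \<rho> (x, y') = (x' - x) * pd1 \<rho> (\<theta>1, y')"
    by auto
  have "\<exists>\<theta>\<in>{min y y'..max y y'}. (\<lambda>t. \<rho> (x, t)) y' - (\<lambda>t. \<rho> (x, t)) y = (y' - y) * (\<lambda>t. pd2 \<rho> (x, t)) \<theta>"
  proof (rule mvt_line2[OF _ y])
    fix t assume "t \<in> {0..1::real}"
    then have "(x, t) \<in> Astrip" by (simp add: Astrip_iff)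
    then show "((\<lambda>t. \<rho> (x, t)) has_real_derivative pd2 \<rho> (x, t)) (at t within {0..1})"
      using D unfolding Dok_def der2_def by fastforce
  qed
  then obtain \<theta>2 where t2: "\<theta>2 \<in> {min y y'..max y y'}" "\<rho> (x, y') - \<rho> (x, y) = (y' - y) * pd2 \<rho> (x, \<theta>2)"
    by auto
  show ?thesis using t1 t2 by (intro exI[of _ \<theta>1] exI[of _ \<theta>2]) auto
qed

lemma theta_lim:
  fixes U \<theta> :: "real \<Rightarrow> real"
  assumes "(U \<longlongrightarrow> u) F" "eventually (\<lambda>t. \<theta> t \<in> {min u (U t)..max u (U t)}) F"
  shows "(\<theta> \<longlongrightarrow> u) F"
proof -
  have a: "((\<lambda>t. \<bar>U t - u\<bar>) \<longlongrightarrow> 0) F" using assms(1) by (intro tendsto_rabs_zero LIM_zero)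
  have b: "eventually (\<lambda>t. norm (\<theta> t - u) \<le> \<bar>U t - u\<bar>) F"
    using assms(2) by eventually_elim auto
  have "((\<lambda>t. \<theta> t - u) \<longlongrightarrow> 0) F" by (rule Lim_null_comparison[OF b a])
  then show ?thesis by (rule LIM_zero_cancel)
qed

lemma pd_lim:
  assumes "continuous_on Astrip h" "q \<in> Astrip" "(P \<longlongrightarrow> q) F" "eventually (\<lambda>t. P t \<in> Astrip) F"
  shows "((\<lambda>t. h (P t)) \<longlongrightarrow> h q) F"
  using assms continuous_on_eq_continuous_within continuous_within_tendsto_compose by blast

lemma ev_within: "t0 \<in> S \<Longrightarrow> (\<And>t. t \<in> S \<Longrightarrow> t \<noteq> t0 \<Longrightarrow> P t) \<Longrightarrow> eventually P (at t0 within S)"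
  unfolding eventually_at_filter by (simp add: always_eventually)

lemma chain:
  assumes D: "Dok \<rho>" and c1: "continuous_on Astrip (pd1 \<rho>)" and c2: "continuous_on Astrip (pd2 \<rho>)"
    and S: "\<And>t. t \<in> S \<Longrightarrow> (U t, V t) \<in> Astrip" and z: "z \<in> S"
    and dU: "(U has_real_derivative dU) (at z within S)"
    and dV: "(V has_real_derivative dV) (at z within S)"
  shows "((\<lambda>t. \<rho> (U t, V t)) has_real_derivative
            (pd1 \<rho> (U z, V z) * dU + pd2 \<rho> (U z, V z) * dV)) (at z within S)"
proof -
  define u v where "u = U z" and "v = V z"
  have q: "(u, v) \<in> Astrip" using S z by (simp add: u_def v_def)
  have "\<forall>t\<in>S. \<exists>z. fst z \<in> {min u (U t)..max u (U t)} \<and> snd z \<in> {min v (V t)..max v (V t)} \<and>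
     \<rho> (U t, V t) - \<rho> (u, v) = (U t - u) * pd1 \<rho> (fst z, V t) + (V t - v) * pd2 \<rho> (u, snd z)"
    using rho_split[OF D q S] by fastforce
  then obtain th where th: "\<And>t. t \<in> S \<Longrightarrow> fst (th t) \<in> {min u (U t)..max u (U t)} \<and> snd (th t) \<in> {min v (V t)..max v (V t)} \<and>
     \<rho> (U t, V t) - \<rho> (u, v) = (U t - u) * pd1 \<rho> (fst (th t), V t) + (V t - v) * pd2 \<rho> (u, snd (th t))"
    by metis
  have Ul: "(U \<longlongrightarrow> u) (at z within S)" using DERIV_continuous[OF dU] by (simp add: continuous_within u_def)
  have Vl: "(V \<longlongrightarrow> v) (at z within S)" using DERIV_continuous[OF dV] by (simp add: continuous_within v_def)
  have Ut: "((\<lambda>t. (U t - u) / (t - z)) \<longlongrightarrow> dU) (at z within S)" using dU by (simp add: has_field_derivative_iff u_def)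
  have Vt: "((\<lambda>t. (V t - v) / (t - z)) \<longlongrightarrow> dV) (at z within S)" using dV by (simp add: has_field_derivative_iff v_def)
  have th1: "((\<lambda>t. fst (th t)) \<longlongrightarrow> u) (at z within S)"
    by (rule theta_lim[OF Ul]) (rule ev_within[OF z], use th in blast)
  have th2: "((\<lambda>t. snd (th t)) \<longlongrightarrow> v) (at z within S)"
    by (rule theta_lim[OF Vl]) (rule ev_within[OF z], use th in blast)
  have Sv: "t \<in> S \<Longrightarrow> V t \<in> {0..1}" for t using S[of t] by (simp add: Astrip_iff)
  have l1: "((\<lambda>t. pd1 \<rho> (fst (th t), V t)) \<longlongrightarrow> pd1 \<rho> (u, v)) (at z within S)"
    apply (rule pd_lim[OF c1 q])
     apply (rule tendsto_Pair[OF th1 Vl])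
    apply (rule ev_within[OF z]) using Sv by (simp add: Astrip_iff)
  have l2: "((\<lambda>t. pd2 \<rho> (u, snd (th t))) \<longlongrightarrow> pd2 \<rho> (u, v)) (at z within S)"
    apply (rule pd_lim[OF c2 q])
     apply (rule tendsto_Pair[OF tendsto_const th2])
    apply (rule ev_within[OF z]) subgoal for t
      using th[of t] Sv[of t] q by (auto simp: Astrip_iff) .
  have lim: "((\<lambda>t. (U t - u) / (t - z) * pd1 \<rho> (fst (th t), V t) + (V t - v) / (t - z) * pd2 \<rho> (u, snd (th t)))
     \<longlongrightarrow> dU * pd1 \<rho> (u, v) + dV * pd2 \<rho> (u, v)) (at z within S)"
    by (intro tendsto_add tendsto_mult Ut Vt l1 l2)
  have "((\<lambda>t. (\<rho> (U t, V t) - \<rho> (u, v)) / (t - z)) \<longlongrightarrow> dU * pd1 \<rho> (u, v) + dV * pd2 \<rho> (u, v)) (at z within S)"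
    apply (rule Lim_transform_eventually[OF lim])
    apply (rule ev_within[OF z])
    subgoal for t using th[of t] by (simp add: add_divide_distrib)
    done
  then show ?thesis by (simp add: has_field_derivative_iff u_def v_def mult.commute)
qed


lemma Cs_cont: "Cs_on_A k f \<Longrightarrow> continuous_on Astrip f"
  using Cs_mono'[of k f 0] by (simp add: Cs0)

lemma Cs_comp:
  assumes "Cs_on_A k \<rho>" "Cs_on_A k u" "Cs_on_A k v" "\<And>p. p \<in> Astrip \<Longrightarrow> (u p, v p) \<in> Astrip"
  shows "Cs_on_A k (\<lambda>p. \<rho> (u p, v p))"
  using assms
proof (induction k arbitrary: \<rho> u v)
  case 0
  have "continuous_on Astrip (\<lambda>p. \<rho> (u p, v p))"
    apply (rule continuous_on_compose2[of Astrip \<rho> Astrip "\<lambda>p. (u p, v p)", simplified])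
    using 0 by (auto simp: Cs0 intro: continuous_on_Pair)
  then show ?case by (simp add: Cs0)
next
  case (Suc k)
  have u: "Cs_on_A k u" and v: "Cs_on_A k v" using Suc.prems Cs_mono by blast+
  have D: "Dok \<rho>" using Dok_Cs Suc.prems(1) .
  have c1: "continuous_on Astrip (pd1 \<rho>)" using Cs_cont CsD(4) Suc.prems(1) by blast
  have c2: "continuous_on Astrip (pd2 \<rho>)" using Cs_cont CsD(5) Suc.prems(1) by blast
  show ?case
  proof (rule CsI[where Da="\<lambda>p. pd1 \<rho> (u p, v p) * pd1 u p + pd2 \<rho> (u p, v p) * pd1 v p"
                   and Db="\<lambda>p. pd1 \<rho> (u p, v p) * pd2 u p + pd2 \<rho> (u p, v p) * pd2 v p"])
    show "continuous_on Astrip (\<lambda>p. \<rho> (u p, v p))"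
      using Cs_cont Suc.IH Suc.prems u v Cs_mono by blast
    fix p assume p: "p \<in> Astrip"
    obtain a b where ab: "p = (a, b)" by (cases p)
    have bb: "b \<in> {0..1}" using p ab by (simp add: Astrip_iff)
    show "der1 (\<lambda>p. \<rho> (u p, v p)) (pd1 \<rho> (u p, v p) * pd1 u p + pd2 \<rho> (u p, v p) * pd1 v p) p"
      unfolding der1_def ab fst_conv snd_conv
      apply (rule chain[OF D c1 c2, where S=UNIV and U="\<lambda>t. u (t, b)" and V="\<lambda>t. v (t, b)" and z=a, simplified])
      using Suc.prems(4) bb CsD(2)[OF Suc.prems(2) p] CsD(2)[OF Suc.prems(3) p]
      by (auto simp: Astrip_iff der1_def ab)
    show "der2 (\<lambda>p. \<rho> (u p, v p)) (pd1 \<rho> (u p, v p) * pd2 u p + pd2 \<rho> (u p, v p) * pd2 v p) p"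
      unfolding der2_def ab fst_conv snd_conv
      apply (rule chain[OF D c1 c2, where S="{0..1}" and U="\<lambda>t. u (a, t)" and V="\<lambda>t. v (a, t)" and z=b, simplified])
      using Suc.prems(4) bb CsD(3)[OF Suc.prems(2) p] CsD(3)[OF Suc.prems(3) p]
      by (auto simp: Astrip_iff der2_def ab)
  next
    have r1: "Cs_on_A k (\<lambda>p. pd1 \<rho> (u p, v p))" using Suc.IH[OF CsD(4)[OF Suc.prems(1)] u v Suc.prems(4)] .
    have r2: "Cs_on_A k (\<lambda>p. pd2 \<rho> (u p, v p))" using Suc.IH[OF CsD(5)[OF Suc.prems(1)] u v Suc.prems(4)] .
    show "Cs_on_A k (\<lambda>p. pd1 \<rho> (u p, v p) * pd1 u p + pd2 \<rho> (u p, v p) * pd1 v p)"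
      by (intro Cs_add Cs_mult r1 r2 CsD(4) Suc.prems(2,3))
    show "Cs_on_A k (\<lambda>p. pd1 \<rho> (u p, v p) * pd2 u p + pd2 \<rho> (u p, v p) * pd2 v p)"
      by (intro Cs_add Cs_mult r1 r2 CsD(5) Suc.prems(2,3))
  qed
qed

lemma aux_div: fixes A B c d p x :: real
  assumes "B \<noteq> 0" "d \<noteq> 0" "A * B = c + p * x" shows "(c / d + p * (x / d)) / B = A / d"
proof -
  have "c * d + d * (p * x) = d * (c + p * x)" by (simp add: algebra_simps)
  also have "\<dots> = A * (B * d)" using assms(3) by simp
  finally show ?thesis using assms(1,2) by (simp add: field_simps)
qed

lemma implicit_deriv:
  assumes D: "Dok \<rho>" and c1: "continuous_on Astrip (pd1 \<rho>)" and c2: "continuous_on Astrip (pd2 \<rho>)"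
    and bd: "\<And>q. q \<in> Astrip \<Longrightarrow> \<bar>pd2 \<rho> q\<bar> \<le> 1/2"
    and S: "\<And>t. t \<in> S \<Longrightarrow> (X t, T t) \<in> Astrip" and t0: "t0 \<in> S"
    and eq: "\<And>t. t \<in> S \<Longrightarrow> T t - \<rho> (X t, T t) = C t"
    and dX: "(X has_real_derivative dX) (at t0 within S)"
    and dC: "(C has_real_derivative dC) (at t0 within S)"
    and Tl: "(T \<longlongrightarrow> T t0) (at t0 within S)"
  shows "(T has_real_derivative (dC + pd1 \<rho> (X t0, T t0) * dX) / (1 - pd2 \<rho> (X t0, T t0))) (at t0 within S)"
proof -
  define u v where "u = X t0" and "v = T t0"
  have q: "(u, v) \<in> Astrip" using S t0 by (simp add: u_def v_def)
  have "\<forall>t\<in>S. \<exists>z. fst z \<in> {min u (X t)..max u (X t)} \<and> snd z \<in> {min v (T t)..max v (T t)} \<and>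
     \<rho> (X t, T t) - \<rho> (u, v) = (X t - u) * pd1 \<rho> (fst z, T t) + (T t - v) * pd2 \<rho> (u, snd z)"
    using rho_split[OF D q S] by fastforce
  then obtain th where th: "\<And>t. t \<in> S \<Longrightarrow> fst (th t) \<in> {min u (X t)..max u (X t)} \<and> snd (th t) \<in> {min v (T t)..max v (T t)} \<and>
     \<rho> (X t, T t) - \<rho> (u, v) = (X t - u) * pd1 \<rho> (fst (th t), T t) + (T t - v) * pd2 \<rho> (u, snd (th t))"
    by metis
  have Xl: "(X \<longlongrightarrow> u) (at t0 within S)" using DERIV_continuous[OF dX] by (simp add: continuous_within u_def)
  have Tl': "(T \<longlongrightarrow> v) (at t0 within S)" using Tl by (simp add: v_def)
  have Xt: "((\<lambda>t. (X t - u) / (t - t0)) \<longlongrightarrow> dX) (at t0 within S)" using dX by (simp add: has_field_derivative_iff u_def)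
  have Ct: "((\<lambda>t. (C t - C t0) / (t - t0)) \<longlongrightarrow> dC) (at t0 within S)" using dC by (simp add: has_field_derivative_iff)
  have th1: "((\<lambda>t. fst (th t)) \<longlongrightarrow> u) (at t0 within S)"
    by (rule theta_lim[OF Xl]) (rule ev_within[OF t0], use th in blast)
  have th2: "((\<lambda>t. snd (th t)) \<longlongrightarrow> v) (at t0 within S)"
    by (rule theta_lim[OF Tl']) (rule ev_within[OF t0], use th in blast)
  have Sv: "t \<in> S \<Longrightarrow> T t \<in> {0..1}" for t using S[of t] by (simp add: Astrip_iff)
  have th2S: "t \<in> S \<Longrightarrow> (u, snd (th t)) \<in> Astrip" for t
    using th[of t] Sv[of t] q by (auto simp: Astrip_iff)
  have l1: "((\<lambda>t. pd1 \<rho> (fst (th t), T t)) \<longlongrightarrow> pd1 \<rho> (u, v)) (at t0 within S)"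
    apply (rule pd_lim[OF c1 q])
     apply (rule tendsto_Pair[OF th1 Tl'])
    apply (rule ev_within[OF t0]) using Sv by (simp add: Astrip_iff)
  have l2: "((\<lambda>t. pd2 \<rho> (u, snd (th t))) \<longlongrightarrow> pd2 \<rho> (u, v)) (at t0 within S)"
    apply (rule pd_lim[OF c2 q])
     apply (rule tendsto_Pair[OF tendsto_const th2])
    apply (rule ev_within[OF t0]) using th2S by blast
  have nz: "1 - pd2 \<rho> (u, v) \<noteq> 0" using bd[OF q] by auto
  have lim: "((\<lambda>t. ((C t - C t0) / (t - t0) + pd1 \<rho> (fst (th t), T t) * ((X t - u) / (t - t0))) / (1 - pd2 \<rho> (u, snd (th t))))
     \<longlongrightarrow> (dC + pd1 \<rho> (u, v) * dX) / (1 - pd2 \<rho> (u, v))) (at t0 within S)"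
    by (intro tendsto_divide tendsto_add tendsto_mult tendsto_diff tendsto_const Ct Xt l1 l2 nz)
  have "((\<lambda>t. (T t - v) / (t - t0)) \<longlongrightarrow> (dC + pd1 \<rho> (u, v) * dX) / (1 - pd2 \<rho> (u, v))) (at t0 within S)"
    apply (rule Lim_transform_eventually[OF lim])
    apply (rule ev_within[OF t0])
  proof -
    fix t assume t: "t \<in> S" "t \<noteq> t0"
    have nz': "1 - pd2 \<rho> (u, snd (th t)) \<noteq> 0" using bd[OF th2S[OF t(1)]] by auto
    have e0: "C t0 = v - \<rho> (u, v)" using eq[OF t0] by (simp add: u_def v_def)
    have e1: "(T t - v) * (1 - pd2 \<rho> (u, snd (th t))) = (C t - C t0) + pd1 \<rho> (fst (th t), T t) * (X t - u)"
      using th[OF t(1)] eq[OF t(1)] e0 by (simp add: algebra_simps)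
    have tt: "t - t0 \<noteq> 0" using t by simp
    show "((C t - C t0) / (t - t0) + pd1 \<rho> (fst (th t), T t) * ((X t - u) / (t - t0))) / (1 - pd2 \<rho> (u, snd (th t))) =
          (T t - v) / (t - t0)"
      by (rule aux_div[OF nz' tt e1])
  qed
  then show ?thesis by (simp add: has_field_derivative_iff u_def v_def)
qed




lemma Afun_int: assumes "A_fun f" "y \<in> {0..1}" shows "f (x + of_int n, y) = f (x, y)"
proof -
  have nat: "f (x + real m, y) = f (x, y)" for x m
  proof (induction m)
    case 0 then show ?case by simp
  next
    case (Suc m)
    have "f (x + real (Suc m), y) = f ((x + real m) + 1, y)" by (simp add: algebra_simps)
    also have "\<dots> = f (x + real m, y)" using assms unfolding A_fun_def by blast
    finally show ?case using Suc by simp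
  qed
  show ?thesis
  proof (cases "n \<ge> 0")
    case True
    obtain m where "n = int m" using True by (intro that[of "nat n"]) simp
    then show ?thesis using nat by simp
  next
    case False
    obtain m where m: "n = - int m" using False by (intro that[of "nat (-n)"]) simp
    have "f (x + of_int n, y) = f ((x + of_int n) + real m, y)" using nat by simp
    then show ?thesis using m by simp
  qed
qed

lemma Afun_Ints: assumes "A_fun f" "y \<in> {0..1}" "x' - x \<in> \<int>" shows "f (x', y) = f (x, y)"
proof -
  obtain n where "x' - x = of_int n" using assms(3) Ints_cases by blast
  then have "x' = x + of_int n" by simp
  then show ?thesis using Afun_int[OF assms(1,2)] by simp
qed

lemma pd1_Afun: assumes "A_fun h" shows "A_fun (pd1 h)"
  unfolding A_fun_def
proof (intro allI impI)
  fix \<xi> \<eta> :: real assume e: "\<eta> \<in> {0..1}"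
  have fe: "(\<lambda>t. h (t + 1, \<eta>)) = (\<lambda>t. h (t, \<eta>))" using assms e unfolding A_fun_def by auto
  have "((\<lambda>t. h (t, \<eta>)) has_real_derivative d) (at (\<xi> + 1)) \<longleftrightarrow>
        ((\<lambda>t. h (t, \<eta>)) has_real_derivative d) (at \<xi>)" for d
    using DERIV_shift[of "\<lambda>t. h (t, \<eta>)" d \<xi> 1] fe by simp
  then show "pd1 h (\<xi> + 1, \<eta>) = pd1 h (\<xi>, \<eta>)" unfolding pd1_def by simp
qed

lemma pd2_Afun: assumes "A_fun h" shows "A_fun (pd2 h)"
  unfolding A_fun_def
proof (intro allI impI)
  fix \<xi> \<eta> :: real assume e: "\<eta> \<in> {0..1}"
  have fe: "\<And>t. t \<in> {0..1} \<Longrightarrow> h (\<xi> + 1, t) = h (\<xi>, t)" using assms unfolding A_fun_def by auto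
  have "((\<lambda>t. h (\<xi> + 1, t)) has_real_derivative d) (at \<eta> within {0..1}) \<longleftrightarrow>
        ((\<lambda>t. h (\<xi>, t)) has_real_derivative d) (at \<eta> within {0..1})" for d
  proof
    assume "((\<lambda>t. h (\<xi> + 1, t)) has_real_derivative d) (at \<eta> within {0..1})"
    then show "((\<lambda>t. h (\<xi>, t)) has_real_derivative d) (at \<eta> within {0..1})"
      by (rule has_field_derivative_transform_within[where d=1]) (use e fe in auto)
  next
    assume "((\<lambda>t. h (\<xi>, t)) has_real_derivative d) (at \<eta> within {0..1})"
    then show "((\<lambda>t. h (\<xi> + 1, t)) has_real_derivative d) (at \<eta> within {0..1})"
      by (rule has_field_derivative_transform_within[where d=1]) (use e fe in auto)
  qed
  then show "pd2 h (\<xi> + 1, \<eta>) = pd2 h (\<xi>, \<eta>)" unfolding pd2_def by simp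
qed

lemma partials_Afun: "A_fun g \<Longrightarrow> h \<in> partials k g \<Longrightarrow> A_fun h"
  by (induction k arbitrary: h) (auto intro: pd1_Afun pd2_Afun)

lemma finite_partials: "finite (partials k g)"
  by (induction k) auto

lemma bounded_Afun:
  assumes "A_fun h" "continuous_on Astrip h"
  shows "\<exists>B. \<forall>p\<in>Astrip. \<bar>h p\<bar> \<le> B"
proof -
  have K: "{0..1} \<times> {0..1} \<subseteq> Astrip" by (auto simp: Astrip_def)
  have "compact (h ` ({0..1} \<times> {0..1::real}))"
    using assms(2) K by (intro compact_continuous_image compact_Times compact_Icc) (rule continuous_on_subset)
  then have "bounded (h ` ({0..1} \<times> {0..1::real}))" by (rule compact_imp_bounded)
  then obtain B where B: "\<forall>x\<in>h ` ({0..1} \<times> {0..1}). norm x \<le> B"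
    unfolding bounded_iff by blast
  show ?thesis
  proof (intro exI ballI)
    fix p assume p: "p \<in> Astrip"
    obtain x y where xy: "p = (x, y)" by (cases p)
    have y: "y \<in> {0..1}" using p xy by (simp add: Astrip_iff)
    have "h (x, y) = h (x + of_int (- \<lfloor>x\<rfloor>), y)" using Afun_int[OF assms(1) y, of x "- \<lfloor>x\<rfloor>"] by simp
    moreover have "x + of_int (- \<lfloor>x\<rfloor>) \<in> {0..1}"
      using of_int_floor_le[of x] real_of_int_floor_add_one_gt[of x] by (simp only: atLeastAtMost_iff of_int_minus; linarith)
    ultimately show "\<bar>h p\<bar> \<le> B" using B y xy by auto
  qed
qed

lemma Cs_norm_bound:
  assumes "A_fun \<rho>" "Cs_on_A s \<rho>" "k \<le> s" "h \<in> partials k \<rho>" "p \<in> Astrip"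
  shows "\<bar>h p\<bar> \<le> Cs_norm s \<rho>"
proof -
  define P where "P = (\<Union>k\<in>{..s}. partials k \<rho>)"
  have fP: "finite P" unfolding P_def using finite_partials by blast
  have "\<forall>h\<in>P. \<exists>B. \<forall>p\<in>Astrip. \<bar>h p\<bar> \<le> B"
  proof
    fix h assume "h \<in> P"
    then obtain k where "k \<le> s" "h \<in> partials k \<rho>" unfolding P_def by auto
    then have c: "continuous_on Astrip h" using assms(2) unfolding Cs_on_A_def by blast
    have "A_fun h" using partials_Afun assms(1) \<open>h \<in> partials k \<rho>\<close> by blast
    then show "\<exists>B. \<forall>p\<in>Astrip. \<bar>h p\<bar> \<le> B" using bounded_Afun c by blast
  qed
  from bchoice[OF this] obtain Bf where Bf: "\<forall>h\<in>P. \<forall>p\<in>Astrip. \<bar>h p\<bar> \<le> Bf h" by blast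
  have "bdd_above {\<bar>h p\<bar> | k h p. k \<le> s \<and> h \<in> partials k \<rho> \<and> p \<in> Astrip}"
  proof (rule bdd_aboveI[where M="\<Sum>h\<in>P. \<bar>Bf h\<bar>"])
    fix x assume "x \<in> {\<bar>h p\<bar> | k h p. k \<le> s \<and> h \<in> partials k \<rho> \<and> p \<in> Astrip}"
    then obtain k h p where x: "x = \<bar>h p\<bar>" "k \<le> s" "h \<in> partials k \<rho>" "p \<in> Astrip" by blast
    then have hP: "h \<in> P" unfolding P_def by auto
    have "x \<le> Bf h" using Bf hP x by blast
    also have "\<dots> \<le> \<bar>Bf h\<bar>" by simp
    also have "\<dots> \<le> (\<Sum>h\<in>P. \<bar>Bf h\<bar>)" using fP hP by (intro member_le_sum) auto
    finally show "x \<le> (\<Sum>h\<in>P. \<bar>Bf h\<bar>)" .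
  qed
  moreover have "\<bar>h p\<bar> \<in> {\<bar>h p\<bar> | k h p. k \<le> s \<and> h \<in> partials k \<rho> \<and> p \<in> Astrip}"
    using assms(3-5) by blast
  ultimately show ?thesis unfolding Cs_norm_def by (intro cSup_upper)
qed




lemma half_le_zero: "(d::real) \<le> d / 2 \<Longrightarrow> 0 \<le> d \<Longrightarrow> d \<le> 0" by linarith

locale rctx =
  fixes \<rho> :: "real \<times> real \<Rightarrow> real" and s :: nat
  assumes Af: "A_fun \<rho>" and Cs: "Cs_on_A s \<rho>" and s1: "1 \<le> s"
    and z0: "\<And>\<xi>. \<rho> (\<xi>, 0) = 0" and z1: "\<And>\<xi>. \<rho> (\<xi>, 1) = 0"
    and b1: "\<And>q. q \<in> Astrip \<Longrightarrow> \<bar>pd1 \<rho> q\<bar> \<le> 1/2"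
    and b2: "\<And>q. q \<in> Astrip \<Longrightarrow> \<bar>pd2 \<rho> q\<bar> \<le> 1/2"
begin

lemma CsS: "Cs_on_A (Suc (s - 1)) \<rho>" using Cs s1 by simp

lemma Dr: "Dok \<rho>" using Dok_Cs[OF CsS] .
lemma cr: "continuous_on Astrip \<rho>" using Cs_cont[OF Cs] .
lemma Cs1: "Cs_on_A (s - 1) (pd1 \<rho>)" using CsD(4)[OF CsS] .
lemma Cs2: "Cs_on_A (s - 1) (pd2 \<rho>)" using CsD(5)[OF CsS] .
lemma c1: "continuous_on Astrip (pd1 \<rho>)" using Cs_cont[OF Cs1] .
lemma c2: "continuous_on Astrip (pd2 \<rho>)" using Cs_cont[OF Cs2] .

lemma lip2:
  assumes "t1 \<in> {0..1}" "t2 \<in> {0..1}"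
  shows "\<bar>\<rho> (x, t2) - \<rho> (x, t1)\<bar> \<le> \<bar>t2 - t1\<bar> / 2"
proof -
  have p: "(x, t1) \<in> Astrip" "(x, t2) \<in> Astrip" using assms by (auto simp: Astrip_iff)
  obtain th1 th2 where th: "th2 \<in> {min t1 t2..max t1 t2}"
    "\<rho> (x, t2) - \<rho> (x, t1) = (x - x) * pd1 \<rho> (th1, t2) + (t2 - t1) * pd2 \<rho> (x, th2)"
    using rho_split[OF Dr p] by blast
  have "(x, th2) \<in> Astrip" using th(1) assms by (auto simp: Astrip_iff)
  then have "\<bar>pd2 \<rho> (x, th2)\<bar> \<le> 1/2" by (rule b2)
  then have "\<bar>t2 - t1\<bar> * \<bar>pd2 \<rho> (x, th2)\<bar> \<le> \<bar>t2 - t1\<bar> * (1/2)" by (intro mult_left_mono) auto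
  then show ?thesis using th(2) by (simp add: abs_mult)
qed

lemma rb:
  assumes "y \<in> {0..1}"
  shows "\<bar>\<rho> (x, y)\<bar> \<le> y / 2" "\<bar>\<rho> (x, y)\<bar> \<le> (1 - y) / 2"
  using lip2[of 0 y x] lip2[of y 1 x] assms z0[of x] z1[of x] by auto

definition sol :: "real \<Rightarrow> real \<Rightarrow> real \<Rightarrow> real" where
  "sol \<sigma> x c = (THE t. t \<in> {0..1} \<and> t + \<sigma> * \<rho> (x, t) = c)"

lemma sol_ex1:
  assumes sg: "\<bar>\<sigma>\<bar> = 1" and c: "c \<in> {0..1}"
  shows "\<exists>!t. t \<in> {0..1} \<and> t + \<sigma> * \<rho> (x, t) = c"
proof -
  have cont: "continuous_on {0..1} (\<lambda>t. t + \<sigma> * \<rho> (x, t))"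
  proof -
    have "continuous_on {0..1} (\<lambda>t. \<rho> (x, t))"
      by (rule continuous_on_compose2[OF cr, of "{0..1}" "\<lambda>t. (x, t)"])
         (auto intro: continuous_intros simp: Astrip_iff)
    then show ?thesis by (intro continuous_intros)
  qed
  have "\<exists>t. 0 \<le> t \<and> t \<le> 1 \<and> t + \<sigma> * \<rho> (x, t) = c"
    by (rule IVT'[of "\<lambda>t. t + \<sigma> * \<rho> (x, t)"]) (use c z0 z1 cont in auto)
  then obtain t where t: "t \<in> {0..1}" "t + \<sigma> * \<rho> (x, t) = c" by auto
  show ?thesis
  proof (rule ex1I[of _ t])
    show "t \<in> {0..1} \<and> t + \<sigma> * \<rho> (x, t) = c" using t by simp
    fix t' assume t': "t' \<in> {0..1} \<and> t' + \<sigma> * \<rho> (x, t') = c"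
    have "t' - t = \<sigma> * (\<rho> (x, t) - \<rho> (x, t'))" using t t' by (simp add: algebra_simps)
    then have "\<bar>t' - t\<bar> = \<bar>\<rho> (x, t) - \<rho> (x, t')\<bar>" using sg by (simp add: abs_mult)
    also have "\<dots> \<le> \<bar>t - t'\<bar> / 2" using lip2 t t' by blast
    also have "\<dots> = \<bar>t' - t\<bar> / 2" by (simp add: abs_minus_commute)
    finally have "\<bar>t' - t\<bar> \<le> \<bar>t' - t\<bar> / 2" .
    then have "\<bar>t' - t\<bar> \<le> 0" using half_le_zero abs_ge_zero by blast
    then show "t' = t" by simp
  qed
qed

lemma sol:
  assumes "\<bar>\<sigma>\<bar> = 1" "c \<in> {0..1}"
  shows "sol \<sigma> x c \<in> {0..1}" "sol \<sigma> x c + \<sigma> * \<rho> (x, sol \<sigma> x c) = c"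
  using theI'[OF sol_ex1[OF assms, of x]] unfolding sol_def by auto

lemma sol_eq:
  assumes "\<bar>\<sigma>\<bar> = 1" "c \<in> {0..1}" "t \<in> {0..1}" "t + \<sigma> * \<rho> (x, t) = c"
  shows "sol \<sigma> x c = t"
  unfolding sol_def using the1_equality[OF sol_ex1[OF assms(1,2), of x]] assms(3,4) by blast

lemma sol_per:
  assumes "x' - x \<in> \<int>"
  shows "sol \<sigma> x' c = sol \<sigma> x c"
proof -
  have "(\<lambda>t. t \<in> {0..1} \<and> t + \<sigma> * \<rho> (x', t) = c) = (\<lambda>t. t \<in> {0..1} \<and> t + \<sigma> * \<rho> (x, t) = c)"
    using Afun_Ints[OF Af _ assms] by auto
  then show ?thesis unfolding sol_def by simp
qed

definition aa :: "real \<times> real \<Rightarrow> real" where "aa p = snd p + \<rho> p"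
definition bb :: "real \<times> real \<Rightarrow> real" where "bb p = fst p + snd p + \<rho> p"
definition H :: "real \<times> real \<Rightarrow> real" where "H p = sol (-1) (bb p) (aa p)"
definition xm :: "real \<times> real \<Rightarrow> real" where "xm p = fst p - snd p + \<rho> p"
definition Hm :: "real \<times> real \<Rightarrow> real" where "Hm p = sol 1 (xm p) (snd p - \<rho> p)"

lemma aa_range: "p \<in> Astrip \<Longrightarrow> aa p \<in> {0..1}"
  using rb[of "snd p" "fst p"] by (auto simp: aa_def Astrip_iff)
lemma am_range: "p \<in> Astrip \<Longrightarrow> snd p - \<rho> p \<in> {0..1}"
  using rb[of "snd p" "fst p"] by (auto simp: Astrip_iff)

lemma H_prop: "p \<in> Astrip \<Longrightarrow> H p \<in> {0..1}" "p \<in> Astrip \<Longrightarrow> H p - \<rho> (bb p, H p) = aa p"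
  using sol[of "-1" "aa p" "bb p"] aa_range[of p] by (auto simp: H_def)
lemma H_eq: "p \<in> Astrip \<Longrightarrow> t \<in> {0..1} \<Longrightarrow> t - \<rho> (bb p, t) = aa p \<Longrightarrow> H p = t"
  using sol_eq[of "-1" "aa p" t "bb p"] aa_range[of p] by (auto simp: H_def)
lemma Hm_prop: "p \<in> Astrip \<Longrightarrow> Hm p \<in> {0..1}" "p \<in> Astrip \<Longrightarrow> Hm p + \<rho> (xm p, Hm p) = snd p - \<rho> p"
  using sol[of 1 "snd p - \<rho> p" "xm p"] am_range[of p] by (auto simp: Hm_def)
lemma Hm_eq: "p \<in> Astrip \<Longrightarrow> t \<in> {0..1} \<Longrightarrow> t + \<rho> (xm p, t) = snd p - \<rho> p \<Longrightarrow> Hm p = t"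
  using sol_eq[of 1 "snd p - \<rho> p" t "xm p"] am_range[of p] by (auto simp: Hm_def)

lemma aa_fun: "aa = (\<lambda>q. snd q + \<rho> q)" by (rule ext) (simp add: aa_def)
lemma bb_fun: "bb = (\<lambda>q. fst q + snd q + \<rho> q)" by (rule ext) (simp add: bb_def)

lemma Cs_aa: "Cs_on_A k aa" if "k \<le> s"
  unfolding aa_fun by (intro Cs_add Cs_snd Cs_mono'[OF Cs that])
lemma Cs_bb: "Cs_on_A k bb" if "k \<le> s"
  unfolding bb_fun by (intro Cs_add Cs_snd Cs_fst Cs_mono'[OF Cs that])

lemma H_lip:
  assumes p: "p \<in> Astrip" and q: "q \<in> Astrip"
  shows "\<bar>H q - H p\<bar> \<le> 2 * \<bar>aa q - aa p\<bar> + \<bar>bb q - bb p\<bar>"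
proof -
  have P: "(bb p, H p) \<in> Astrip" "(bb q, H q) \<in> Astrip" using H_prop p q by (auto simp: Astrip_iff)
  obtain th1 th2 where th: "th2 \<in> {min (H p) (H q)..max (H p) (H q)}"
    "\<rho> (bb q, H q) - \<rho> (bb p, H p) = (bb q - bb p) * pd1 \<rho> (th1, H q) + (H q - H p) * pd2 \<rho> (bb p, th2)"
    using rho_split[OF Dr P] by blast
  have A: "\<bar>pd1 \<rho> (th1, H q)\<bar> \<le> 1/2" using b1 H_prop(1)[OF q] by (simp add: Astrip_iff)
  have t2: "0 \<le> th2 \<and> th2 \<le> 1" using th(1) H_prop(1)[OF p] H_prop(1)[OF q]
    by (auto simp: min_def max_def split: if_splits)
  have B: "\<bar>pd2 \<rho> (bb p, th2)\<bar> \<le> 1/2" using b2[of "(bb p, th2)"] t2 by (simp add: Astrip_iff)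
  have e: "H q - H p = (aa q - aa p) + (bb q - bb p) * pd1 \<rho> (th1, H q) + (H q - H p) * pd2 \<rho> (bb p, th2)"
    using H_prop(2)[OF p] H_prop(2)[OF q] th(2) by (simp add: algebra_simps)
  have A': "\<bar>(bb q - bb p) * pd1 \<rho> (th1, H q)\<bar> \<le> \<bar>bb q - bb p\<bar> * (1/2)"
    unfolding abs_mult by (intro mult_left_mono A) auto
  have B': "\<bar>(H q - H p) * pd2 \<rho> (bb p, th2)\<bar> \<le> \<bar>H q - H p\<bar> * (1/2)"
    unfolding abs_mult by (intro mult_left_mono B) auto
  have "\<bar>H q - H p\<bar> \<le> \<bar>aa q - aa p\<bar> + \<bar>(bb q - bb p) * pd1 \<rho> (th1, H q)\<bar> + \<bar>(H q - H p) * pd2 \<rho> (bb p, th2)\<bar>"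
    by (subst e) (rule order_trans[OF abs_triangle_ineq add_right_mono[OF abs_triangle_ineq]])
  then show ?thesis using A' B' by linarith
qed

lemma H_cont: "continuous_on Astrip H"
  unfolding continuous_on_def
proof (intro ballI)
  fix p assume p: "p \<in> Astrip"
  have ca: "(aa \<longlongrightarrow> aa p) (at p within Astrip)" using Cs_cont[OF Cs_aa[of 0]] p
    unfolding continuous_on_def by auto
  have cb: "(bb \<longlongrightarrow> bb p) (at p within Astrip)" using Cs_cont[OF Cs_bb[of 0]] p
    unfolding continuous_on_def by auto
  have g: "((\<lambda>q. 2 * \<bar>aa q - aa p\<bar> + \<bar>bb q - bb p\<bar>) \<longlongrightarrow> 2 * 0 + 0) (at p within Astrip)"
    by (intro tendsto_add tendsto_mult tendsto_const tendsto_rabs_zero LIM_zero ca cb)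
  have ev: "eventually (\<lambda>q. norm (H q - H p) \<le> 2 * \<bar>aa q - aa p\<bar> + \<bar>bb q - bb p\<bar>) (at p within Astrip)"
    unfolding eventually_at_filter using H_lip[OF p] by (simp add: always_eventually)
  have "((\<lambda>q. H q - H p) \<longlongrightarrow> 0) (at p within Astrip)"
    by (rule Lim_null_comparison[OF ev]) (use g in simp)
  then show "(H \<longlongrightarrow> H p) (at p within Astrip)" by (rule LIM_zero_cancel)
qed


lemma H_line1: "continuous_on UNIV (\<lambda>t. H (t, y))" if "y \<in> {0..1}"
  by (rule continuous_on_compose2[OF H_cont, of UNIV "\<lambda>t. (t, y)"])
     (use that in \<open>auto intro: continuous_intros simp: Astrip_iff\<close>)
lemma H_line2: "continuous_on {0..1} (\<lambda>t. H (x, t))"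
  by (rule continuous_on_compose2[OF H_cont, of "{0..1}" "\<lambda>t. (x, t)"])
     (auto intro: continuous_intros simp: Astrip_iff)

lemma der1_bb: "p \<in> Astrip \<Longrightarrow> der1 bb (1 + pd1 \<rho> p) p"
  unfolding bb_fun using der1_add[OF der1_add[of "\<lambda>q. fst q" 1 p "\<lambda>q. snd q" 0] conjunct1[OF Dr[unfolded Dok_def, rule_format]]]
  by (simp add: der1_def)
lemma der2_bb: "p \<in> Astrip \<Longrightarrow> der2 bb (1 + pd2 \<rho> p) p"
  unfolding bb_fun using der2_add[OF der2_add[of "\<lambda>q. fst q" 0 p "\<lambda>q. snd q" 1] conjunct2[OF Dr[unfolded Dok_def, rule_format]]]
  by (simp add: der2_def)
lemma der1_aa: "p \<in> Astrip \<Longrightarrow> der1 aa (pd1 \<rho> p) p"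
  unfolding aa_fun using der1_add[OF _ conjunct1[OF Dr[unfolded Dok_def, rule_format]], of "\<lambda>q. snd q" 0 p]
  by (simp add: der1_def)
lemma der2_aa: "p \<in> Astrip \<Longrightarrow> der2 aa (1 + pd2 \<rho> p) p"
  unfolding aa_fun using der2_add[OF _ conjunct2[OF Dr[unfolded Dok_def, rule_format]], of "\<lambda>q. snd q" 1 p]
  by (simp add: der2_def)

lemma nz: "p \<in> Astrip \<Longrightarrow> 1 - pd2 \<rho> (bb p, H p) \<noteq> 0"
  using b2[of "(bb p, H p)"] H_prop(1)[of p] by (auto simp: Astrip_iff)

lemma der1_H: "p \<in> Astrip \<Longrightarrow>
   der1 H ((pd1 \<rho> p + pd1 \<rho> (bb p, H p) * (1 + pd1 \<rho> p)) * inverse (1 - pd2 \<rho> (bb p, H p))) p"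
proof -
  assume p: "p \<in> Astrip"
  obtain x y where xy: "p = (x, y)" by (cases p)
  have y: "y \<in> {0..1}" using p xy by (simp add: Astrip_iff)
  have "((\<lambda>t. H (t, y)) has_real_derivative
     (pd1 \<rho> (x, y) + pd1 \<rho> ((\<lambda>t. bb (t, y)) x, H (x, y)) * (1 + pd1 \<rho> (x, y))) / (1 - pd2 \<rho> ((\<lambda>t. bb (t, y)) x, H (x, y)))) (at x within UNIV)"
  proof (rule implicit_deriv[OF Dr c1 c2 b2, where S=UNIV and X="\<lambda>t. bb (t, y)" and C="\<lambda>t. aa (t, y)" and T="\<lambda>t. H (t, y)"])
    show "((\<lambda>t. bb (t, y)) has_real_derivative 1 + pd1 \<rho> (x, y)) (at x within UNIV)"
      using der1_bb[OF p] by (simp add: der1_def xy)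
    show "((\<lambda>t. aa (t, y)) has_real_derivative pd1 \<rho> (x, y)) (at x within UNIV)"
      using der1_aa[OF p] by (simp add: der1_def xy)
    show "((\<lambda>t. H (t, y)) \<longlongrightarrow> H (x, y)) (at x within UNIV)"
      using H_line1[OF y] by (simp add: continuous_on_eq_continuous_at isCont_def)
    fix t
    have "(t, y) \<in> Astrip" using y by (simp add: Astrip_iff)
    then show "(bb (t, y), H (t, y)) \<in> Astrip" "H (t, y) - \<rho> (bb (t, y), H (t, y)) = aa (t, y)"
      using H_prop by (auto simp: Astrip_iff)
  qed auto
  then show ?thesis by (simp add: der1_def xy divide_inverse)
qed

lemma der2_H: "p \<in> Astrip \<Longrightarrow>
   der2 H (((1 + pd2 \<rho> p) + pd1 \<rho> (bb p, H p) * (1 + pd2 \<rho> p)) * inverse (1 - pd2 \<rho> (bb p, H p))) p"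
proof -
  assume p: "p \<in> Astrip"
  obtain x y where xy: "p = (x, y)" by (cases p)
  have y: "y \<in> {0..1}" using p xy by (simp add: Astrip_iff)
  have "((\<lambda>t. H (x, t)) has_real_derivative
     ((1 + pd2 \<rho> (x, y)) + pd1 \<rho> ((\<lambda>t. bb (x, t)) y, H (x, y)) * (1 + pd2 \<rho> (x, y))) / (1 - pd2 \<rho> ((\<lambda>t. bb (x, t)) y, H (x, y)))) (at y within {0..1})"
  proof (rule implicit_deriv[OF Dr c1 c2 b2, where S="{0..1}" and X="\<lambda>t. bb (x, t)" and C="\<lambda>t. aa (x, t)" and T="\<lambda>t. H (x, t)"])
    show "((\<lambda>t. bb (x, t)) has_real_derivative 1 + pd2 \<rho> (x, y)) (at y within {0..1})"
      using der2_bb[OF p] by (simp add: der2_def xy)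
    show "((\<lambda>t. aa (x, t)) has_real_derivative 1 + pd2 \<rho> (x, y)) (at y within {0..1})"
      using der2_aa[OF p] by (simp add: der2_def xy)
    show "((\<lambda>t. H (x, t)) \<longlongrightarrow> H (x, y)) (at y within {0..1})"
      using H_line2 y by (simp add: continuous_on_eq_continuous_within continuous_within)
    show "y \<in> {0..1}" by (rule y)
    fix t :: real assume t: "t \<in> {0..1}"
    have "(x, t) \<in> Astrip" using t by (simp add: Astrip_iff)
    then show "(bb (x, t), H (x, t)) \<in> Astrip" "H (x, t) - \<rho> (bb (x, t), H (x, t)) = aa (x, t)"
      using H_prop by (auto simp: Astrip_iff)
  qed auto
  then show ?thesis by (simp add: der2_def xy divide_inverse)
qed

lemma H_Cs: "k \<le> s \<Longrightarrow> Cs_on_A k H"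
proof (induction k)
  case 0 then show ?case by (simp add: Cs0 H_cont)
next
  case (Suc k)
  have k: "k \<le> s - 1" "k \<le> s" using Suc.prems by auto
  have IH: "Cs_on_A k H" using Suc.IH k by simp
  have r1: "Cs_on_A k (pd1 \<rho>)" using Cs_mono'[OF Cs1 k(1)] .
  have r2: "Cs_on_A k (pd2 \<rho>)" using Cs_mono'[OF Cs2 k(1)] .
  have bH: "\<And>p. p \<in> Astrip \<Longrightarrow> (bb p, H p) \<in> Astrip" using H_prop by (auto simp: Astrip_iff)
  have c1': "Cs_on_A k (\<lambda>p. pd1 \<rho> (bb p, H p))" by (rule Cs_comp[OF r1 Cs_bb[OF k(2)] IH bH])
  have c2': "Cs_on_A k (\<lambda>p. pd2 \<rho> (bb p, H p))" by (rule Cs_comp[OF r2 Cs_bb[OF k(2)] IH bH])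
  have iv: "Cs_on_A k (\<lambda>p. inverse (1 - pd2 \<rho> (bb p, H p)))"
    by (rule Cs_inv[OF Cs_diff[OF Cs_const c2']]) (use nz in blast)
  show ?case
  proof (rule CsI[OF H_cont der1_H der2_H])
    show "Cs_on_A k (\<lambda>p. (pd1 \<rho> p + pd1 \<rho> (bb p, H p) * (1 + pd1 \<rho> p)) * inverse (1 - pd2 \<rho> (bb p, H p)))"
      by (intro Cs_mult Cs_add r1 c1' Cs_const iv)
    show "Cs_on_A k (\<lambda>p. ((1 + pd2 \<rho> p) + pd1 \<rho> (bb p, H p) * (1 + pd2 \<rho> p)) * inverse (1 - pd2 \<rho> (bb p, H p)))"
      by (intro Cs_mult Cs_add r2 c1' Cs_const iv)
  qed
qed


definition FF :: "real \<times> real \<Rightarrow> real \<times> real" where "FF p = (bb p, H p)"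
definition FI :: "real \<times> real \<Rightarrow> real \<times> real" where "FI p = (xm p, Hm p)"

lemma rho_eqA: "p \<in> Astrip \<Longrightarrow> q \<in> Astrip \<Longrightarrow> eqA p q \<Longrightarrow> \<rho> p = \<rho> q"
  using Afun_Ints[OF Af, of "snd q" "fst p" "fst q"] by (cases p, cases q) (auto simp: eqA_def Astrip_iff)

lemma A_map_FF: "A_map FF"
  unfolding A_map_def
proof (intro conjI ballI impI)
  fix p assume p: "p \<in> Astrip"
  then show "FF p \<in> Astrip" using H_prop by (simp add: FF_def Astrip_iff)
  fix q assume q: "q \<in> Astrip" and e: "eqA p q"
  have r: "\<rho> p = \<rho> q" by (rule rho_eqA[OF p q e])
  have i: "bb p - bb q \<in> \<int>" using e r by (simp add: bb_def eqA_def)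
  have a: "aa p = aa q" using e r by (simp add: aa_def eqA_def)
  have "H p = H q" unfolding H_def a using sol_per[OF i] by simp
  then show "eqA (FF p) (FF q)" using i by (simp add: FF_def eqA_def)
qed

lemma A_map_FI: "A_map FI"
  unfolding A_map_def
proof (intro conjI ballI impI)
  fix p assume p: "p \<in> Astrip"
  then show "FI p \<in> Astrip" using Hm_prop by (simp add: FI_def Astrip_iff)
  fix q assume q: "q \<in> Astrip" and e: "eqA p q"
  have r: "\<rho> p = \<rho> q" by (rule rho_eqA[OF p q e])
  have i: "xm p - xm q \<in> \<int>" using e r by (simp add: xm_def eqA_def)
  have a: "snd p - \<rho> p = snd q - \<rho> q" using e r by (simp add: eqA_def)
  have "Hm p = Hm q" unfolding Hm_def a using sol_per[OF i] by simp
  then show "eqA (FI p) (FI q)" using i by (simp add: FI_def eqA_def)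
qed

lemma is_F_FF: "is_F s \<rho> FF"
  unfolding is_F_def
proof (intro conjI allI ballI)
  show "A_map FF" by (rule A_map_FF)
  have "(\<lambda>p. fst (FF p)) = bb" "(\<lambda>p. snd (FF p)) = H" by (auto simp: FF_def)
  then show "Cs_map s FF" unfolding Cs_map_def using Cs_bb H_Cs by simp
  fix \<xi> :: real
  have p: "(\<xi>, 0) \<in> Astrip" by (simp add: Astrip_iff)
  have "H (\<xi>, 0) = 0" by (rule H_eq[OF p]) (auto simp: bb_def aa_def z0)
  then show "eqA (FF (\<xi>, 0)) (\<xi>, 0)" by (simp add: FF_def bb_def eqA_def z0)
next
  fix p assume p: "p \<in> Astrip"
  show "fst (FF p) - (fst p + snd p + \<rho> p) \<in> \<int>" by (simp add: FF_def bb_def)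
  show "snd (FF p) = snd p + \<rho> p + \<rho> (FF p)" using H_prop(2)[OF p] by (simp add: FF_def aa_def)
qed

lemma FF_unique: "is_F s \<rho> G \<Longrightarrow> p \<in> Astrip \<Longrightarrow> eqA (G p) (FF p)"
proof -
  assume G: "is_F s \<rho> G" and p: "p \<in> Astrip"
  have Gs: "G p \<in> Astrip" using G p unfolding is_F_def A_map_def by blast
  have i: "fst (G p) - bb p \<in> \<int>" and e: "snd (G p) = snd p + \<rho> p + \<rho> (G p)"
    using G p unfolding is_F_def by (auto simp: bb_def)
  have "\<rho> (G p) = \<rho> (bb p, snd (G p))"
    using Afun_Ints[OF Af _ i] Gs by (cases "G p") (auto simp: Astrip_iff)
  then have "snd (G p) - \<rho> (bb p, snd (G p)) = aa p" using e by (simp add: aa_def)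
  then have "H p = snd (G p)" using H_eq[OF p] Gs by (simp add: Astrip_iff)
  then show "eqA (G p) (FF p)" using i by (simp add: eqA_def FF_def)
qed

lemma FF_1: "eqA (FF (\<xi>, 1)) (\<xi>, 1)"
proof -
  have p: "(\<xi>, 1) \<in> Astrip" by (simp add: Astrip_iff)
  have "H (\<xi>, 1) = 1" by (rule H_eq[OF p]) (auto simp: bb_def aa_def z1)
  then show ?thesis by (simp add: FF_def bb_def eqA_def z1)
qed

lemma FF_FI: "p \<in> Astrip \<Longrightarrow> eqA (FF (FI p)) p"
proof -
  assume p: "p \<in> Astrip"
  obtain x y where xy: "p = (x, y)" by (cases p)
  have q: "FI p \<in> Astrip" using A_map_FI p unfolding A_map_def by blast
  have e: "Hm p + \<rho> (FI p) = y - \<rho> p" using Hm_prop(2)[OF p] by (simp add: FI_def xy)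
  have b: "bb (FI p) = x" using e by (simp add: bb_def FI_def xm_def xy)
  have "H (FI p) = y"
    by (rule H_eq[OF q]) (use p e b in \<open>auto simp: xy aa_def FI_def Astrip_iff\<close>)
  then show ?thesis using b by (simp add: FF_def eqA_def xy)
qed

lemma FI_FF: "p \<in> Astrip \<Longrightarrow> eqA (FI (FF p)) p"
proof -
  assume p: "p \<in> Astrip"
  obtain x y where xy: "p = (x, y)" by (cases p)
  have q: "FF p \<in> Astrip" using A_map_FF p unfolding A_map_def by blast
  have e: "H p - \<rho> (FF p) = y + \<rho> p" using H_prop(2)[OF p] by (simp add: FF_def aa_def xy)
  have b: "xm (FF p) = x" using e by (simp add: bb_def FF_def xm_def xy)
  have "Hm (FF p) = y"
    by (rule Hm_eq[OF q]) (use p e b in \<open>auto simp: xy FF_def Astrip_iff\<close>)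
  then show ?thesis using b by (simp add: FI_def eqA_def xy)
qed

lemma FI_formula: "p \<in> Astrip \<Longrightarrow> fst (FI p) - (fst p - snd p + \<rho> p) \<in> \<int> \<and> snd (FI p) = snd p - \<rho> p - \<rho> (FI p)"
  using Hm_prop(2)[of p] by (simp add: FI_def xm_def)

end




theorem lemmaA1:
  fixes s :: nat
  assumes "s \<ge> 2"
  shows "\<exists>\<epsilon>>0. \<forall>\<rho>. A_fun \<rho> \<and> Cs_on_A s \<rho> \<and>
            (\<forall>\<xi>. \<rho> (\<xi>, 0) = 0 \<and> \<rho> (\<xi>, 1) = 0) \<and> Cs_norm s \<rho> < \<epsilon> \<longrightarrow>
          (\<exists>F. is_F s \<rho> F \<and>
               (\<forall>G. is_F s \<rho> G \<longrightarrow> (\<forall>p\<in>Astrip. eqA (G p) (F p))) \<and>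
               (\<forall>\<xi>. eqA (F (\<xi>, 1)) (\<xi>, 1)) \<and>
               (\<exists>Finv. A_map Finv \<and>
                  (\<forall>p\<in>Astrip. eqA (F (Finv p)) p \<and> eqA (Finv (F p)) p) \<and>
                  (\<forall>p\<in>Astrip. fst (Finv p) - (fst p - snd p + \<rho> p) \<in> \<int> \<and>
                     snd (Finv p) = snd p - \<rho> p - \<rho> (Finv p))))"
proof (rule exI[of _ "1/2"], intro conjI allI impI)
  show "(0::real) < 1/2" by simp
  have s1: "1 \<le> s" using assms by simp
  fix \<rho> assume h: "A_fun \<rho> \<and> Cs_on_A s \<rho> \<and> (\<forall>\<xi>. \<rho> (\<xi>, 0) = 0 \<and> \<rho> (\<xi>, 1) = 0) \<and> Cs_norm s \<rho> < 1/2"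
  have p1: "pd1 \<rho> \<in> partials 1 \<rho>" "pd2 \<rho> \<in> partials 1 \<rho>" by simp_all
  have b1: "\<bar>pd1 \<rho> q\<bar> \<le> 1/2" if "q \<in> Astrip" for q
    using Cs_norm_bound[of \<rho> s 1 "pd1 \<rho>" q] h s1 p1 that by linarith
  have b2: "\<bar>pd2 \<rho> q\<bar> \<le> 1/2" if "q \<in> Astrip" for q
    using Cs_norm_bound[of \<rho> s 1 "pd2 \<rho>" q] h s1 p1 that by linarith
  interpret R: rctx \<rho> s
    by unfold_locales (use h s1 b1 b2 in auto)
  show "\<exists>F. is_F s \<rho> F \<and>
               (\<forall>G. is_F s \<rho> G \<longrightarrow> (\<forall>p\<in>Astrip. eqA (G p) (F p))) \<and>
               (\<forall>\<xi>. eqA (F (\<xi>, 1)) (\<xi>, 1)) \<and>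
               (\<exists>Finv. A_map Finv \<and>
                  (\<forall>p\<in>Astrip. eqA (F (Finv p)) p \<and> eqA (Finv (F p)) p) \<and>
                  (\<forall>p\<in>Astrip. fst (Finv p) - (fst p - snd p + \<rho> p) \<in> \<int> \<and>
                     snd (Finv p) = snd p - \<rho> p - \<rho> (Finv p)))"
    using R.is_F_FF R.FF_unique R.FF_1 R.A_map_FI R.FF_FI R.FI_FF R.FI_formula by blast
qed


end
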